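(* Let $a,b,c>0$ with $a,b\in(0,1)$, $a<c$ and $b<c$. Let $F(x)=F(a,b;c;x)$ and $F_1(x)=F(1-x)$ for $x\in(0,1)$. Then the function $f(x)=x(1-x)F(x)F_1(x)$ is increasing on $(0,1/2]$ and decreasing on $[1/2,1)$.
   Context: $F(a,b;c;x)=\sum_{n=0}^\infty\frac{(a,n)(b,n)}{(c,n)\,n!}x^n$ for $|x|<1$ is the Gaussian hypergeometric function, where $(a,0)=1$ and $(a,n)=a(a+1)\cdots(a+n-1)$ for $n\ge1$. *)

theory Defs
  imports "HOL-Analysis.Analysis"
begin

text \<open>Gaussian hypergeometric function F(a,b;c;x) for real parameters, as a power series
  (meaningful for |x| < 1). pochhammer a n is the rising factorial (a,n).\<close>
definition hypergeom :: "real \<Rightarrow> real \<Rightarrow> real \<Rightarrow> real \<Rightarrow> real" where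
  "hypergeom a b c x =
     (\<Sum>n. pochhammer a n * pochhammer b n / (pochhammer c n * fact n) * x ^ n)"

end

theory Submission
  imports Defs
begin

lemma pow_convex:
  fixes x z t :: real
  assumes "0 \<le> x" "0 \<le> z" "0 \<le> t" "t \<le> 1"
  shows "((1 - t) * x + t * z) ^ n \<le> (1 - t) * x ^ n + t * z ^ n"
proof -
  have "convex_on {0::real..} (\<lambda>x. x^n)"
  proof (cases "even n")
    case True
    then show ?thesis using convex_power_even convex_on_subset by blast
  next
    case False
    then show ?thesis using convex_power_odd by blast
  qed
  from convex_onD[OF this, of t x z] assms show ?thesis by simp
qed

lemma key_ineq:
  fixes u :: "real \<Rightarrow> real"
  assumes conc: "\<And>x z t. 0 < x \<Longrightarrow> x < 1 \<Longrightarrow> 0 < z \<Longrightarrow> z < 1 \<Longrightarrow> 0 \<le> t \<Longrightarrow> t \<le> 1 \<Longrightarrow>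
                   t * u x + (1 - t) * u z \<le> u (t * x + (1 - t) * z)"
    and pos: "\<And>x. 0 < x \<Longrightarrow> x < 1 \<Longrightarrow> 0 < u x"
    and dec: "\<And>x z. 0 < x \<Longrightarrow> x < z \<Longrightarrow> z < 1 \<Longrightarrow> u z < u x"
    and xy: "0 < x" "x < y" "y \<le> 1/2"
  shows "u x * u (1 - x) < u y * u (1 - y)"
proof -
  define t where "t = (1 - x - y) / (1 - 2 * x)"
  have d: "0 < 1 - 2 * x" using xy by simp
  have t0: "0 < t" unfolding t_def using xy d by (intro divide_pos_pos) auto
  have t1: "t < 1" unfolding t_def using xy d by (simp add: divide_less_eq)
  have tt: "t * (1 - 2 * x) = 1 - x - y" unfolding t_def using d by simp
  have "t * x + (1 - t) * (1 - x) = (1 - x) - t * (1 - 2 * x)" by (simp add: algebra_simps)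
  with tt have ey: "y = t * x + (1 - t) * (1 - x)" by linarith
  have ey': "1 - y = (1 - t) * x + (1 - (1 - t)) * (1 - x)" using ey by (simp add: algebra_simps)
  define p where "p = u x"
  define q where "q = u (1 - x)"
  have q0: "0 < q" unfolding q_def using xy by (intro pos) auto
  have pq: "q < p" unfolding p_def q_def using xy by (intro dec) auto
  have h1: "t * p + (1 - t) * q \<le> u y" unfolding p_def q_def ey using xy t0 t1
    by (intro conc) auto
  have h2: "(1 - t) * p + t * q \<le> u (1 - y)" unfolding p_def q_def
    using conc[of x "1 - x" "1 - t"] ey' xy t0 t1 by auto
  have l1: "0 < t * p + (1 - t) * q" using t0 t1 q0 pq
    by (simp add: add_pos_nonneg)
  have l2: "0 < (1 - t) * p + t * q" using t0 t1 q0 pq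
    by (simp add: add_pos_nonneg)
  have "(t * p + (1 - t) * q) * ((1 - t) * p + t * q) = p * q + t * (1 - t) * (p - q)^2"
    by (simp add: algebra_simps power2_eq_square)
  also have "\<dots> > p * q" using t0 t1 pq by (simp add: mult_pos_pos)
  finally have "p * q < (t * p + (1 - t) * q) * ((1 - t) * p + t * q)" .
  also have "\<dots> \<le> u y * u (1 - y)" using h1 h2 l1 l2 by (intro mult_mono) auto
  finally show ?thesis unfolding p_def q_def .
qed

theorem theorem3p3:
  fixes a b c :: real
  assumes "0 < a" "a < 1" "0 < b" "b < 1" "0 < c" "a < c" "b < c"
  defines "f \<equiv> (\<lambda>x. x * (1 - x) * hypergeom a b c x * hypergeom a b c (1 - x))"
  shows "(\<forall>x\<in>{0<..1/2}. \<forall>y\<in>{0<..1/2}. x < y \<longrightarrow> f x < f y) \<and>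
         (\<forall>x\<in>{1/2..<1}. \<forall>y\<in>{1/2..<1}. x < y \<longrightarrow> f y < f x)"
proof -
  define A where "A n = pochhammer a n * pochhammer b n / (pochhammer c n * fact n)" for n
  have Apos: "0 < A n" for n unfolding A_def using assms
    by (intro divide_pos_pos mult_pos_pos pochhammer_pos) auto
  have Adec: "A (Suc n) < A n" for n
  proof -
    have r: "A (Suc n) = A n * ((a + n) * (b + n) / ((c + n) * (n + 1)))"
    proof -
      have "A (Suc n)
        = (pochhammer a n * pochhammer b n * ((a + n) * (b + n))) / ((pochhammer c n * fact n) * ((c + n) * (n + 1)))"
        unfolding A_def
        by (simp only: pochhammer_Suc fact_Suc of_nat_mult of_nat_Suc mult_ac) (simp add: algebra_simps)
      also have "\<dots> = A n * ((a + n) * (b + n) / ((c + n) * (n + 1)))"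
        unfolding A_def by (rule times_divide_times_eq[symmetric])
      finally show ?thesis .
    qed
    have "a * b < a" using assms by simp
    then have ab: "a*b < c" using assms by linarith
    have "(a + b) * n \<le> (c + 1) * n" using assms by (intro mult_right_mono) auto
    then have "(a + n) * (b + n) < (c + n) * (n + 1)" using ab by (simp add: algebra_simps)
    then have "(a + n) * (b + n) / ((c + n) * (n + 1)) < 1" using assms
      by (simp add: divide_less_eq)
    from mult_strict_left_mono[OF this Apos[of n]] show ?thesis unfolding r by simp
  qed
  have A0: "A 0 = 1" unfolding A_def by simp
  have Ale1: "A n \<le> 1" for n
  proof (induction n)
    case 0 then show ?case using A0 by simp
  next
    case (Suc n) then show ?case using Adec[of n] by simp
  qed
  have summ: "summable (\<lambda>n. A n * x ^ n)" if "\<bar>x\<bar> < 1" for x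
  proof (rule summable_comparison_test[of _ "\<lambda>n. \<bar>x\<bar> ^ n"])
    show "\<exists>N. \<forall>n\<ge>N. norm (A n * x ^ n) \<le> \<bar>x\<bar> ^ n"
    proof (intro exI allI impI)
      fix n :: nat
      have "\<bar>A n\<bar> \<le> 1" using Apos[of n] Ale1[of n] by simp
      then show "norm (A n * x ^ n) \<le> \<bar>x\<bar> ^ n"
        by (simp add: abs_mult power_abs mult_left_le_one_le)
    qed
    show "summable (\<lambda>n. \<bar>x\<bar> ^ n)" using that by (simp add: summable_geometric)
  qed
  have HF: "hypergeom a b c x = (\<Sum>n. A n * x ^ n)" for x
    unfolding hypergeom_def A_def by simp
  define w where "w x = (\<Sum>n. (A n - A (Suc n)) * x ^ Suc n)" for x
  have u_eq: "(1 - x) * hypergeom a b c x = 1 - w x"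
    and wsumm: "summable (\<lambda>n. (A n - A (Suc n)) * x ^ Suc n)" if "0 \<le> x" "x < 1" for x
  proof -
    have ax: "\<bar>x\<bar> < 1" using that by simp
    have s1: "(\<lambda>n. A n * x ^ n) sums hypergeom a b c x" using summ[OF ax] HF summable_sums by metis
    have s2: "(\<lambda>n. A (Suc n) * x ^ Suc n) sums (hypergeom a b c x - A 0)"
      using s1 sums_Suc_iff[of "\<lambda>n. A n * x ^ n"] by simp
    have s3: "(\<lambda>n. x * (A n * x ^ n)) sums (x * hypergeom a b c x)" using sums_mult[OF s1] .
    have s4: "(\<lambda>n. x * (A n * x ^ n) - A (Suc n) * x ^ Suc n) sums
              (x * hypergeom a b c x - (hypergeom a b c x - A 0))"
      using sums_diff[OF s3 s2] .
    have s5: "(\<lambda>n. (A n - A (Suc n)) * x ^ Suc n) sums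
              (x * hypergeom a b c x - (hypergeom a b c x - A 0))"
      using s4 by (simp add: algebra_simps)
    show "summable (\<lambda>n. (A n - A (Suc n)) * x ^ Suc n)" using s5 sums_summable by blast
    show "(1 - x) * hypergeom a b c x = 1 - w x"
      using sums_unique[OF s5] A0 unfolding w_def by (simp add: algebra_simps)
  qed
  define u where "u x = (1 - x) * hypergeom a b c x" for x
  have Fpos: "0 < hypergeom a b c x" if "0 \<le> x" "x < 1" for x
    unfolding HF using that Apos
  proof (intro suminf_pos2[where i=0])
    show "summable (\<lambda>n. A n * x ^ n)" using that by (intro summ) auto
    show "0 \<le> A n * x ^ n" for n using Apos[of n] that by simp
  qed (simp add: A0)
  have upos: "0 < u x" if "0 < x" "x < 1" for x
    unfolding u_def using Fpos[of x] that by simp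
  have conc: "t * u x + (1 - t) * u z \<le> u (t * x + (1 - t) * z)"
    if "0 < x" "x < 1" "0 < z" "z < 1" "0 \<le> t" "t \<le> 1" for x z t
  proof -
    let ?m = "t * x + (1 - t) * z"
    have m0: "0 \<le> ?m" using that by simp
    have m1: "?m < 1"
    proof -
      have "t * x \<le> t * 1" "(1 - t) * z \<le> (1 - t) * 1" using that by (auto intro: mult_left_le)
      moreover have "t * x < t * 1 \<or> (1 - t) * z < (1 - t) * 1"
      proof (cases "t = 0")
        case True then show ?thesis using that by simp
      next
        case False then have "0 < t" using that by simp
        then show ?thesis using that mult_strict_left_mono[of x 1 t] by simp
      qed
      ultimately show ?thesis by auto
    qed
    have "w ?m \<le> t * w x + (1 - t) * w z"
    proof -
      have "w ?m \<le> (\<Sum>n. t * ((A n - A (Suc n)) * x ^ Suc n) + (1 - t) * ((A n - A (Suc n)) * z ^ Suc n))"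
        unfolding w_def
      proof (rule suminf_le)
        fix n
        have "?m ^ Suc n \<le> t * x ^ Suc n + (1 - t) * z ^ Suc n"
          using pow_convex[of z x "t" "Suc n"] that by (simp add: algebra_simps)
        then have "(A n - A (Suc n)) * ?m ^ Suc n \<le> (A n - A (Suc n)) * (t * x ^ Suc n + (1 - t) * z ^ Suc n)"
          using Adec[of n] by (intro mult_left_mono) auto
        then show "(A n - A (Suc n)) * ?m ^ Suc n \<le> t * ((A n - A (Suc n)) * x ^ Suc n) + (1 - t) * ((A n - A (Suc n)) * z ^ Suc n)"
          by (simp add: algebra_simps)
        show "summable (\<lambda>n. (A n - A (Suc n)) * ?m ^ Suc n)" using wsumm m0 m1 by blast
        show "summable (\<lambda>n. t * ((A n - A (Suc n)) * x ^ Suc n) + (1 - t) * ((A n - A (Suc n)) * z ^ Suc n))"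
          using wsumm[of x] wsumm[of z] that by (intro summable_add summable_mult) auto
      qed
      also have "\<dots> = t * w x + (1 - t) * w z"
        unfolding w_def using wsumm[of x] wsumm[of z] that
        by (subst suminf_add[symmetric]) (auto simp: suminf_mult intro: summable_mult)
      finally show ?thesis .
    qed
    moreover have uu: "u x = 1 - w x" "u z = 1 - w z" "u ?m = 1 - w ?m"
      unfolding u_def using u_eq[of x] u_eq[of z] u_eq[OF m0 m1] that by auto
    moreover have ee: "t * (1 - w x) + (1 - t) * (1 - w z) = 1 - (t * w x + (1 - t) * w z)"
      by (simp add: algebra_simps)
    ultimately show ?thesis unfolding uu ee by linarith
  qed
  have dec: "u z < u x" if "0 < x" "x < z" "z < 1" for x z
  proof -
    have "0 < (\<Sum>n. (A n - A (Suc n)) * z ^ Suc n - (A n - A (Suc n)) * x ^ Suc n)"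
    proof (rule suminf_pos2[where i=0])
      show "summable (\<lambda>n. (A n - A (Suc n)) * z ^ Suc n - (A n - A (Suc n)) * x ^ Suc n)"
        using wsumm[of x] wsumm[of z] that by (intro summable_diff) auto
      fix n
      have "x ^ Suc n \<le> z ^ Suc n" using that by (intro power_mono) auto
      then show "0 \<le> (A n - A (Suc n)) * z ^ Suc n - (A n - A (Suc n)) * x ^ Suc n"
        using Adec[of n] by (simp add: right_diff_distrib[symmetric])
    next
      show "0 < (A 0 - A (Suc 0)) * z ^ Suc 0 - (A 0 - A (Suc 0)) * x ^ Suc 0"
        using Adec[of 0] that by (simp add: right_diff_distrib[symmetric])
    qed
    also have "\<dots> = w z - w x" unfolding w_def using wsumm[of x] wsumm[of z] that
      by (subst suminf_diff) auto
    finally show ?thesis unfolding u_def using u_eq[of x] u_eq[of z] that by simp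
  qed
  have fu: "f x = u x * u (1 - x)" for x unfolding f_def u_def by (simp add: algebra_simps)
  have P1: "f x < f y" if "0 < x" "x < y" "y \<le> 1/2" for x y
    unfolding fu using key_ineq[OF conc upos dec, of x y] that by blast
  have sym: "f (1 - x) = f x" for x unfolding fu by simp
  show ?thesis
  proof (intro conjI ballI impI)
    fix x y :: real assume "x \<in> {0<..1/2}" "y \<in> {0<..1/2}" "x < y"
    then show "f x < f y" using P1 by auto
  next
    fix x y :: real assume "x \<in> {1/2..<1}" "y \<in> {1/2..<1}" "x < y"
    then have "f (1 - y) < f (1 - x)" using P1[of "1 - y" "1 - x"] by auto
    then show "f y < f x" using sym by simp
  qed
qed

end
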